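(* Let $N\in\mathbb{N}$. For a function $f:\mathbb{R}^N\to\mathbb{R}$, $V>0$ and $p\in(0,\infty)$ define $$\|f\|_{p,V}:=\sup\Big\{\Big(\frac{1}{|\Omega|}\int_{\Omega}|f(x)|^{p}\,dx\Big)^{1/p} : \Omega\subset\mathbb{R}^N \text{ open and convex},\ |\Omega|=V\Big\},$$ and let $L^p_V:=\{f\mid \|f\|_{p,V}<\infty\}$ modulo functions vanishing almost everywhere. Let $d\in\mathbb{N}$, $\alpha_1,\dots,\alpha_d>0$ and $V=\sum_{l=1}^{d}\alpha_l$. Then for all $p\in[1,\infty)$ and all $f\in L^p_V$, $$\|f\|_{p,V}^{p}\leq\sum_{l=1}^{d}\frac{\alpha_l}{V}\|f\|_{p,\alpha_l}^{p}.$$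
   Context: $|\Omega|$ denotes the $N$-dimensional Lebesgue measure; functions are measurable; the quantities $\|f\|_{p,\alpha_l}$ take values in $[0,\infty]$. *)

theory Defs
  imports "HOL-Analysis.Analysis"
begin

definition ennreal_powr :: "ennreal \<Rightarrow> real \<Rightarrow> ennreal" where
  "ennreal_powr x q = (if x = \<infinity> then \<infinity> else ennreal (enn2real x powr q))"

definition normpV :: "('a::euclidean_space \<Rightarrow> real) \<Rightarrow> real \<Rightarrow> real \<Rightarrow> ennreal" where
  "normpV f p V =
     (SUP \<Omega> \<in> {\<Omega>. open \<Omega> \<and> convex \<Omega> \<and> emeasure lebesgue \<Omega> = ennreal V}.
        ennreal_powr (ennreal (1 / V) * (\<integral>\<^sup>+ x \<in> \<Omega>. ennreal (\<bar>f x\<bar> powr p) \<partial>lebesgue)) (1 / p))"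

end

theory Submission imports Defs "HOL-Probability.Distribution_Functions"
begin

lemma cut_lemma:
  fixes \<Omega> :: "'a::euclidean_space set" and b :: 'a
  assumes \<Omega>: "\<Omega> \<in> sets lebesgue" and m: "emeasure lebesgue \<Omega> = ennreal (A+B)"
    and A: "A > 0" and B: "B > 0" and b: "b \<noteq> 0"
  shows "\<exists>t. emeasure lebesgue (\<Omega> \<inter> {x. x \<bullet> b < t}) = ennreal A
           \<and> emeasure lebesgue (\<Omega> \<inter> {x. x \<bullet> b > t}) = ennreal B"
proof -
  define M where "M = distr (restrict_space lebesgue \<Omega>) borel (\<lambda>x. x \<bullet> b)"
  have gm: "(\<lambda>x. x \<bullet> b) \<in> borel_measurable lebesgue"
    using continuous_imp_measurable_on_sets_lebesgue[of UNIV "\<lambda>x. x \<bullet> b"]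
    by (simp add: continuous_on_inner continuous_on_id continuous_on_const)
  have gmr: "(\<lambda>x. x \<bullet> b) \<in> restrict_space lebesgue \<Omega> \<rightarrow>\<^sub>M borel"
    using gm by (rule measurable_restrict_space1)
  have hm: "\<And>S. S \<in> sets borel \<Longrightarrow> \<Omega> \<inter> {x. x \<bullet> b \<in> S} \<in> sets lebesgue"
  proof -
    fix S :: "real set" assume "S \<in> sets borel"
    then have "{x. x \<bullet> b \<in> S} \<in> sets lebesgue" by (rule lebesgue_measurable_vimage_borel[OF gm])
    then show "\<Omega> \<inter> {x. x \<bullet> b \<in> S} \<in> sets lebesgue" using \<Omega> by auto
  qed
  have eM: "emeasure M S = emeasure lebesgue (\<Omega> \<inter> {x. x \<bullet> b \<in> S})" if S: "S \<in> sets borel" for S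
  proof -
    have "emeasure M S = emeasure (restrict_space lebesgue \<Omega>) ((\<lambda>x. x \<bullet> b) -` S \<inter> \<Omega>)"
      unfolding M_def using emeasure_distr[OF gmr S] by (simp add: space_restrict_space)
    also have "\<dots> = emeasure lebesgue (\<Omega> \<inter> {x. x \<bullet> b \<in> S})"
      by (subst emeasure_restrict_space) (use \<Omega> in \<open>auto intro: arg_cong[where f="emeasure lebesgue"]\<close>)
    finally show ?thesis .
  qed
  have sM: "sets M = sets borel" unfolding M_def by simp
  have spM: "space M = UNIV" unfolding M_def by simp
  have fin: "emeasure M (space M) = ennreal (A+B)"
    using eM[of UNIV] spM m by simp
  interpret finite_borel_measure M
    by (intro finite_borel_measure.intro finite_borel_measure_axioms.intro finite_measureI sM)
      (use fin in simp)
  have hnull: "\<Omega> \<inter> {x. x \<bullet> b = t} \<in> null_sets lebesgue" for t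
  proof -
    have "negligible {x. b \<bullet> x = t}" using b by (intro negligible_hyperplane) auto
    then have "{x. b \<bullet> x = t} \<in> null_sets lebesgue" by (simp add: negligible_iff_null_sets)
    moreover have "{x. b \<bullet> x = t} = {x. x \<bullet> b = t}" by (auto simp: inner_commute)
    ultimately show ?thesis using null_set_Int1[OF _ \<Omega>] by simp
  qed
  have cont: "isCont (cdf M) t" for t
  proof -
    have "emeasure M {t} = 0" using eM[of "{t}"] hnull[of t] by (simp add: null_setsD1)
    then show ?thesis unfolding isCont_cdf by (simp add: measure_def)
  qed
  have mspace: "measure M (space M) = A + B" using fin A B by (simp add: measure_def)
  obtain u where u: "cdf M u < A"
  proof -
    have "\<forall>\<^sub>F x in at_bot. cdf M x < A" using cdf_lim_at_bot A by (rule order_tendstoD)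
    then show ?thesis using that by (auto simp: eventually_at_bot_linorder)
  qed
  obtain v where v: "cdf M v > A"
  proof -
    have "\<forall>\<^sub>F x in at_top. cdf M x > A" using cdf_lim_at_top mspace B
      by (intro order_tendstoD) auto
    then show ?thesis using that by (auto simp: eventually_at_top_linorder)
  qed
  have uv: "u \<le> v" using u v cdf_nondecreasing[of v u] by force
  obtain t where t: "cdf M t = A"
    using IVT'[of "cdf M" u A v] u v uv cont by (auto intro: continuous_at_imp_continuous_on)
  have le_fin: "emeasure lebesgue (\<Omega> \<inter> {x. x \<bullet> b \<in> {..t}}) = ennreal A"
    using t eM[of "{..t}"] emeasure_eq_measure[of "{..t}"] unfolding cdf_def by auto
  have eq1: "\<Omega> \<inter> {x. x \<bullet> b < t} = (\<Omega> \<inter> {x. x \<bullet> b \<in> {..t}}) - (\<Omega> \<inter> {x. x \<bullet> b = t})" by auto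
  have 1: "emeasure lebesgue (\<Omega> \<inter> {x. x \<bullet> b < t}) = ennreal A"
    unfolding eq1 using le_fin hnull hm[of "{..t}"] by (simp add: emeasure_Diff_null_set)
  have eq2: "\<Omega> \<inter> {x. x \<bullet> b > t} = \<Omega> - (\<Omega> \<inter> {x. x \<bullet> b \<in> {..t}})" by auto
  have "emeasure lebesgue (\<Omega> \<inter> {x. x \<bullet> b > t}) = ennreal (A+B) - ennreal A"
    unfolding eq2 using le_fin hm[of "{..t}"] \<Omega> m by (subst emeasure_Diff) auto
  also have "\<dots> = ennreal B" using A B by (simp add: ennreal_minus)
  finally show ?thesis using 1 by blast
qed

lemma open_leb: "open (S::'a::euclidean_space set) \<Longrightarrow> S \<in> sets lebesgue"
  by (metis borel_open sets_completionI_sets sets_lborel)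

lemma split_sum:
  fixes g :: "'a::euclidean_space \<Rightarrow> ennreal" and Q :: "real \<Rightarrow> ennreal" and \<alpha> :: "nat \<Rightarrow> real"
  assumes g: "g \<in> borel_measurable lebesgue"
    and Q: "\<And>c \<Omega>'. c > 0 \<Longrightarrow> open \<Omega>' \<Longrightarrow> convex \<Omega>' \<Longrightarrow> emeasure lebesgue \<Omega>' = ennreal c
             \<Longrightarrow> (\<integral>\<^sup>+x\<in>\<Omega>'. g x \<partial>lebesgue) \<le> ennreal c * Q c"
  shows "d \<ge> 1 \<Longrightarrow> (\<forall>l\<in>{1..d}. \<alpha> l > 0) \<Longrightarrow> open \<Omega> \<Longrightarrow> convex \<Omega>
    \<Longrightarrow> emeasure lebesgue \<Omega> = ennreal (\<Sum>l=1..d. \<alpha> l)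
    \<Longrightarrow> (\<integral>\<^sup>+x\<in>\<Omega>. g x \<partial>lebesgue) \<le> (\<Sum>l=1..d. ennreal (\<alpha> l) * Q (\<alpha> l))"
proof (induction d arbitrary: \<Omega>)
  case 0
  then show ?case by simp
next
  case (Suc k)
  show ?case
  proof (cases "k = 0")
    case True
    then show ?thesis using Suc.prems Q[of "\<alpha> 1" \<Omega>] by simp
  next
    case False
    obtain b :: 'a where b: "b \<in> Basis" using nonempty_Basis by blast
    then have b0: "b \<noteq> 0" by auto
    have pos: "\<forall>l\<in>{1..k}. \<alpha> l > 0" using Suc.prems(2) by auto
    have A: "(\<Sum>l=1..k. \<alpha> l) > 0" using False pos by (intro sum_pos) auto
    have B: "\<alpha> (Suc k) > 0" using Suc.prems(2) by auto
    have sumeq: "(\<Sum>l=1..Suc k. \<alpha> l) = (\<Sum>l=1..k. \<alpha> l) + \<alpha> (Suc k)" by simp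
    have \<Omega>: "\<Omega> \<in> sets lebesgue" using Suc.prems(3) by (rule open_leb)
    obtain t where t1: "emeasure lebesgue (\<Omega> \<inter> {x. x \<bullet> b < t}) = ennreal (\<Sum>l=1..k. \<alpha> l)"
      and t2: "emeasure lebesgue (\<Omega> \<inter> {x. x \<bullet> b > t}) = ennreal (\<alpha> (Suc k))"
      using cut_lemma[OF \<Omega> _ A B b0] Suc.prems(5) sumeq by metis
    define \<Omega>1 where "\<Omega>1 = \<Omega> \<inter> {x. x \<bullet> b < t}"
    define \<Omega>2 where "\<Omega>2 = \<Omega> \<inter> {x. x \<bullet> b > t}"
    have h1: "{x. x \<bullet> b < t} = {x. b \<bullet> x < t}" "{x. x \<bullet> b > t} = {x. b \<bullet> x > t}"
      by (auto simp: inner_commute)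
    have o1: "open \<Omega>1" "convex \<Omega>1" unfolding \<Omega>1_def h1 using Suc.prems(3,4)
      by (auto intro!: open_Int convex_Int open_halfspace_lt convex_halfspace_lt)
    have o2: "open \<Omega>2" "convex \<Omega>2" unfolding \<Omega>2_def h1 using Suc.prems(3,4)
      by (auto intro!: open_Int convex_Int open_halfspace_gt convex_halfspace_gt)
    have I1: "(\<integral>\<^sup>+x\<in>\<Omega>1. g x \<partial>lebesgue) \<le> (\<Sum>l=1..k. ennreal (\<alpha> l) * Q (\<alpha> l))"
      using Suc.IH[OF _ pos o1] False t1 unfolding \<Omega>1_def by auto
    have I2: "(\<integral>\<^sup>+x\<in>\<Omega>2. g x \<partial>lebesgue) \<le> ennreal (\<alpha> (Suc k)) * Q (\<alpha> (Suc k))"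
      using Q[OF B o2] t2 unfolding \<Omega>2_def by auto
    have hnull: "{x. b \<bullet> x = t} \<in> null_sets lebesgue"
      using negligible_hyperplane[of b t] b0 by (simp add: negligible_iff_null_sets)
    have "(\<integral>\<^sup>+x\<in>\<Omega>. g x \<partial>lebesgue) = (\<integral>\<^sup>+x. g x * indicator \<Omega>1 x + g x * indicator \<Omega>2 x \<partial>lebesgue)"
    proof (rule nn_integral_cong_AE)
      show "AE x in lebesgue. g x * indicator \<Omega> x = g x * indicator \<Omega>1 x + g x * indicator \<Omega>2 x"
        using AE_not_in[OF hnull] by eventually_elim (auto simp: \<Omega>1_def \<Omega>2_def indicator_def inner_commute)
    qed
    also have "\<dots> = (\<integral>\<^sup>+x\<in>\<Omega>1. g x \<partial>lebesgue) + (\<integral>\<^sup>+x\<in>\<Omega>2. g x \<partial>lebesgue)"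
      using g open_leb[OF o1(1)] open_leb[OF o2(1)] by (intro nn_integral_add) auto
    also have "\<dots> \<le> (\<Sum>l=1..k. ennreal (\<alpha> l) * Q (\<alpha> l)) + ennreal (\<alpha> (Suc k)) * Q (\<alpha> (Suc k))"
      using I1 I2 by (rule add_mono)
    also have "\<dots> = (\<Sum>l=1..Suc k. ennreal (\<alpha> l) * Q (\<alpha> l))" by simp
    finally show ?thesis .
  qed
qed


lemma powr_mono_enn:
  assumes "x \<le> y" "q > 0"
  shows "ennreal_powr x q \<le> ennreal_powr y q"
proof (cases "y = \<infinity>")
  case True then show ?thesis by (simp add: ennreal_powr_def)
next
  case False
  then obtain r where r: "y = ennreal r" "r \<ge> 0" by (cases y) auto
  with assms obtain s where s: "x = ennreal s" "s \<ge> 0" "s \<le> r"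
    by (cases x) (auto simp: top_unique)
  then show ?thesis using r assms by (simp add: ennreal_powr_def powr_mono2)
qed

lemma powr_back:
  assumes "ennreal_powr x (1/p) \<le> y" "p > 0"
  shows "x \<le> ennreal_powr y p"
proof (cases "y = \<infinity>")
  case True then show ?thesis by (simp add: ennreal_powr_def)
next
  case False
  then obtain r where r: "y = ennreal r" "r \<ge> 0" by (cases y) auto
  have "x \<noteq> \<infinity>" using assms r by (auto simp: ennreal_powr_def top_unique)
  then obtain s where s: "x = ennreal s" "s \<ge> 0" by (cases x) auto
  have "s powr (1/p) \<le> r" using assms(1) r s by (simp add: ennreal_powr_def)
  then have "(s powr (1/p)) powr p \<le> r powr p" using assms(2) by (intro powr_mono2) auto
  then have "s \<le> r powr p" using s assms(2) by (simp add: powr_powr)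
  then show ?thesis using r s by (simp add: ennreal_powr_def)
qed

lemma powr_inv_enn:
  assumes "R \<noteq> \<infinity>" "p > 0"
  shows "ennreal_powr (ennreal_powr R (1/p)) p = R"
proof -
  obtain r where r: "R = ennreal r" "r \<ge> 0" using assms by (cases R) auto
  then show ?thesis using assms by (simp add: ennreal_powr_def powr_powr)
qed

lemma piece_bound:
  fixes f :: "'a::euclidean_space \<Rightarrow> real"
  assumes "c > 0" "open \<Omega>" "convex \<Omega>" "emeasure lebesgue \<Omega> = ennreal c" "p > 0"
  shows "(\<integral>\<^sup>+x\<in>\<Omega>. ennreal (\<bar>f x\<bar> powr p) \<partial>lebesgue) \<le> ennreal c * ennreal_powr (normpV f p c) p"
proof -
  let ?I = "\<integral>\<^sup>+x\<in>\<Omega>. ennreal (\<bar>f x\<bar> powr p) \<partial>lebesgue"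
  have "ennreal_powr (ennreal (1 / c) * ?I) (1 / p) \<le> normpV f p c"
    unfolding normpV_def using assms by (intro SUP_upper) auto
  then have x: "ennreal (1 / c) * ?I \<le> ennreal_powr (normpV f p c) p"
    using assms by (intro powr_back) auto
  have "?I = ennreal c * (ennreal (1 / c) * ?I)"
    using assms(1) by (simp add: mult.assoc[symmetric] ennreal_mult[symmetric])
  also have "\<dots> \<le> ennreal c * ennreal_powr (normpV f p c) p"
    using x by (intro mult_left_mono) auto
  finally show ?thesis .
qed

theorem lemma2p2:
  fixes f :: "'a::euclidean_space \<Rightarrow> real"
    and d :: nat and \<alpha> :: "nat \<Rightarrow> real" and V p :: real
  assumes "d \<ge> 1"
    and "\<forall>l \<in> {1..d}. \<alpha> l > 0"
    and "V = (\<Sum>l = 1..d. \<alpha> l)"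
    and "1 \<le> p"
    and "f \<in> borel_measurable lebesgue"
    and "normpV f p V < \<infinity>"
  shows "ennreal_powr (normpV f p V) p
           \<le> (\<Sum>l = 1..d. ennreal (\<alpha> l / V) * ennreal_powr (normpV f p (\<alpha> l)) p)"
proof -
  note fm[measurable] = assms(5)
  have p: "p > 0" using assms(4) by simp
  have V: "V > 0" using assms(1,2,3) by (metis atLeastAtMost_iff le_refl sum_pos finite_atLeastAtMost empty_iff order.strict_trans2)
  define Q where "Q c = ennreal_powr (normpV f p c) p" for c
  define R where "R = (\<Sum>l = 1..d. ennreal (\<alpha> l / V) * Q (\<alpha> l))"
  have g: "(\<lambda>x. ennreal (\<bar>f x\<bar> powr p)) \<in> borel_measurable lebesgue" by measurable
  have key: "ennreal (1 / V) * (\<integral>\<^sup>+x\<in>\<Omega>. ennreal (\<bar>f x\<bar> powr p) \<partial>lebesgue) \<le> R"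
    if "open \<Omega>" "convex \<Omega>" "emeasure lebesgue \<Omega> = ennreal V" for \<Omega>
  proof -
    have "(\<integral>\<^sup>+x\<in>\<Omega>. ennreal (\<bar>f x\<bar> powr p) \<partial>lebesgue) \<le> (\<Sum>l=1..d. ennreal (\<alpha> l) * Q (\<alpha> l))"
      using split_sum[OF g, of Q d \<alpha> \<Omega>] piece_bound[OF _ _ _ _ p, of _ _ f] assms that
      unfolding Q_def by auto
    then have "ennreal (1 / V) * (\<integral>\<^sup>+x\<in>\<Omega>. ennreal (\<bar>f x\<bar> powr p) \<partial>lebesgue)
        \<le> ennreal (1 / V) * (\<Sum>l=1..d. ennreal (\<alpha> l) * Q (\<alpha> l))"
      by (intro mult_left_mono) auto
    also have "\<dots> = R" unfolding R_def sum_distrib_left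
    proof (rule sum.cong)
      fix l assume "l \<in> {1..d}"
      then have "\<alpha> l > 0" using assms(2) by auto
      then show "ennreal (1 / V) * (ennreal (\<alpha> l) * Q (\<alpha> l)) = ennreal (\<alpha> l / V) * Q (\<alpha> l)"
        using V by (simp add: mult.assoc[symmetric] ennreal_mult[symmetric])
    qed simp
    finally show ?thesis .
  qed
  show ?thesis
  proof (cases "R = \<infinity>")
    case True
    then have "ennreal_powr (normpV f p V) p \<le> R" by simp
    then show ?thesis unfolding R_def Q_def .
  next
    case False
    have "normpV f p V \<le> ennreal_powr R (1/p)"
      unfolding normpV_def using key p by (intro SUP_least powr_mono_enn) auto
    then have "ennreal_powr (normpV f p V) p \<le> ennreal_powr (ennreal_powr R (1/p)) p"
      using p by (rule powr_mono_enn)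
    also have "\<dots> = R" using False p by (rule powr_inv_enn)
    finally show ?thesis unfolding R_def Q_def .
  qed
qed

end
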